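(* Let $p\in(0,1)$, $\mu_p=(1-p)\delta_{-1}+p\delta_1$, $h_0=2p-1$, $\mathcal{U}$ the uniform measure on $[-1,1]$, $I_p(x)=\frac{1+x}{2}\log\frac{1+x}{2p}+\frac{1-x}{2}\log\frac{1-x}{2(1-p)}$ for $x\in[-1,1]$, and $w_p(x,u)=2|I_p'(u)|\mathbf{1}_{x(h_0-u)<0}$ for $x\in\{-1,1\}$, $u\in[-1,1]$. Then for every probability measure $\nu$ on $\{-1,1\}$, $$\mathcal{W}_{w_p}(\nu,\mathcal{U})=H(\nu|\mu_p).$$
   Context: $\mathcal{W}_c(\nu,\tilde\mu)=\inf_\pi\int c\,d\pi$ over couplings $\pi$ of $\nu$ and $\tilde\mu$; $H$ is relative entropy. *)

theory Defs
  imports "HOL-Probability.Probability"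
begin

definition mu_p :: "real \<Rightarrow> real measure" where
  "mu_p p = distr (measure_pmf (bernoulli_pmf p)) borel (\<lambda>b. if b then 1 else -1)"

definition unifU :: "real measure" where
  "unifU = uniform_measure lborel {-1..1}"

definition I_p :: "real \<Rightarrow> real \<Rightarrow> real" where
  "I_p p x = (1 + x) / 2 * ln ((1 + x) / (2 * p)) + (1 - x) / 2 * ln ((1 - x) / (2 * (1 - p)))"

definition w_p :: "real \<Rightarrow> real \<Rightarrow> real \<Rightarrow> ennreal" where
  "w_p p x u = ennreal (2 * \<bar>deriv (I_p p) u\<bar> * (if x * ((2 * p - 1) - u) < 0 then 1 else 0))"

definition couplings :: "real measure \<Rightarrow> real measure \<Rightarrow> (real \<times> real) measure set" where
  "couplings \<nu> \<mu> = {\<pi>. prob_space \<pi> \<and> sets \<pi> = sets (borel :: (real \<times> real) measure)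
      \<and> distr \<pi> borel fst = \<nu> \<and> distr \<pi> borel snd = \<mu>}"

definition transport_cost :: "(real \<Rightarrow> real \<Rightarrow> ennreal) \<Rightarrow> real measure \<Rightarrow> real measure \<Rightarrow> ennreal" where
  "transport_cost c \<nu> \<mu> = (INF \<pi> \<in> couplings \<nu> \<mu>. \<integral>\<^sup>+ z. c (fst z) (snd z) \<partial>\<pi>)"

definition rel_entropy :: "real measure \<Rightarrow> real measure \<Rightarrow> real" where
  "rel_entropy \<nu> \<mu> = KL_divergence (exp 1) \<mu> \<nu>"

end

theory Submission
  imports Defs "HOL-Real_Asymp.Real_Asymp"
begin


definition Fp :: "real \<Rightarrow> real \<Rightarrow> real" where
  "Fp p u = (ln ((1 + u) / (2 * p)) - ln ((1 - u) / (2 * (1 - p)))) / 2"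

lemma I_p_deriv:
  assumes p: "0 < p" "p < 1" and u: "-1 < u" "u < 1"
  shows "(I_p p has_real_derivative Fp p u) (at u)"
proof -
  have d1: "((\<lambda>x::real. (1 + x) / 2) has_real_derivative 1/2) (at u)"
    by (auto intro!: derivative_eq_intros)
  have g: "((\<lambda>x::real. (1 + x) / (2 * p)) has_real_derivative 1/(2*p)) (at u)"
    using p by (auto intro!: derivative_eq_intros)
  have d2: "((\<lambda>x::real. ln ((1 + x) / (2 * p))) has_real_derivative inverse ((1 + u) / (2 * p)) * (1/(2*p))) (at u)"
    using DERIV_chain2[OF DERIV_ln g] p u by simp
  have e1: "((\<lambda>x::real. (1 - x) / 2) has_real_derivative -1/2) (at u)"
    by (auto intro!: derivative_eq_intros)
  have h: "((\<lambda>x::real. (1 - x) / (2 * (1 - p))) has_real_derivative (0 - 1)/(2*(1-p))) (at u)"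
    by (rule DERIV_cdivide DERIV_diff DERIV_const DERIV_ident)+
  have e2: "((\<lambda>x::real. ln ((1 - x) / (2 * (1 - p)))) has_real_derivative inverse ((1 - u) / (2 * (1 - p))) * ((0 - 1)/(2*(1-p)))) (at u)"
    using DERIV_chain2[OF DERIV_ln h] p u by simp
  have "(I_p p has_real_derivative
     (1/2 * ln ((1 + u) / (2 * p)) + inverse ((1 + u) / (2 * p)) * (1/(2*p)) * ((1 + u) / 2))
   + (-1/2 * ln ((1 - u) / (2 * (1 - p))) + inverse ((1 - u) / (2 * (1 - p))) * ((0 - 1)/(2*(1-p))) * ((1 - u) / 2))) (at u)"
    unfolding I_p_def[abs_def] by (rule DERIV_add[OF DERIV_mult[OF d1 d2] DERIV_mult[OF e1 e2]])
  then show ?thesis using p u by (simp add: Fp_def field_simps)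
qed

lemma deriv_I_p: "0 < p \<Longrightarrow> p < 1 \<Longrightarrow> -1 < u \<Longrightarrow> u < 1 \<Longrightarrow> deriv (I_p p) u = Fp p u"
  using I_p_deriv DERIV_imp_deriv by blast

lemma xlnx_cont:
  assumes c: "0 < c"
  shows "continuous_on {0..} (\<lambda>t::real. t * ln (t / c))"
proof -
  have "continuous (at t within {0..}) (\<lambda>t::real. t * ln (t / c))" if t: "t \<ge> 0" for t
  proof (cases "t = 0")
    case True
    have "((\<lambda>t::real. t * ln t - t * ln c) \<longlongrightarrow> 0) (at_right 0)" by real_asymp
    moreover have "eventually (\<lambda>t. t * ln t - t * ln c = t * ln (t / c)) (at_right (0::real))"
      using c by (auto simp: eventually_at_right_field ln_div intro!: exI[of _ 1] simp: algebra_simps)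
    ultimately have "((\<lambda>t::real. t * ln (t / c)) \<longlongrightarrow> 0) (at_right 0)"
      using tendsto_cong by fastforce
    then show ?thesis using True
      by (simp add: continuous_within at_within_Ici_at_right)
  next
    case False
    then have "t > 0" using t by simp
    have "isCont (\<lambda>t. t * ln (t / c)) t" using \<open>t > 0\<close> c
      by (intro continuous_intros; simp)
    then show ?thesis by (rule continuous_at_imp_continuous_within)
  qed
  then show ?thesis by (simp add: continuous_on_eq_continuous_within)
qed

lemma I_p_alt: "I_p p x = ((1 + x) / 2) * ln (((1 + x) / 2) / p) + ((1 - x) / 2) * ln (((1 - x) / 2) / (1 - p))"
  unfolding I_p_def by (simp add: field_simps)

lemma I_p_cont:
  assumes p: "0 < p" "p < 1"
  shows "continuous_on {-1..1} (I_p p)"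
proof -
  have 1: "continuous_on {-1..1} ((\<lambda>t. t * ln (t / p)) \<circ> (\<lambda>x::real. (1 + x) / 2))"
    using p by (intro continuous_on_compose continuous_on_subset[OF xlnx_cont[of p]] continuous_intros) auto
  have 2: "continuous_on {-1..1} ((\<lambda>t. t * ln (t / (1 - p))) \<circ> (\<lambda>x::real. (1 - x) / 2))"
    using p by (intro continuous_on_compose continuous_on_subset[OF xlnx_cont[of "1 - p"]] continuous_intros) auto
  show ?thesis unfolding I_p_alt[abs_def] using continuous_on_add[OF 1 2] by (simp add: o_def)
qed


lemma Fp_mono:
  assumes p: "0 < p" "p < 1" and uv: "-1 < u" "u \<le> v" "v < 1"
  shows "Fp p u \<le> Fp p v"
proof -
  have "ln ((1 + u) / (2 * p)) \<le> ln ((1 + v) / (2 * p))"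
    using p uv by (subst ln_le_cancel_iff) (auto simp: divide_right_mono)
  moreover have "ln ((1 - v) / (2 * (1 - p))) \<le> ln ((1 - u) / (2 * (1 - p)))"
    using p uv by (subst ln_le_cancel_iff) (auto simp: divide_right_mono)
  ultimately show ?thesis unfolding Fp_def by simp
qed

lemma Fp_h0: "0 < p \<Longrightarrow> p < 1 \<Longrightarrow> Fp p (2 * p - 1) = 0"
  by (simp add: Fp_def)

lemma I_p_h0: "0 < p \<Longrightarrow> p < 1 \<Longrightarrow> I_p p (2 * p - 1) = 0"
  by (simp add: I_p_def)

lemma Fp_nonpos:
  assumes p: "0 < p" "p < 1" and x: "-1 \<le> x" "x \<le> 2 * p - 1"
  shows "Fp p x \<le> 0"
proof (cases "x = -1")
  case True then show ?thesis using p by (simp add: Fp_def)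
next
  case False
  then show ?thesis using Fp_mono[of p x "2*p-1"] Fp_h0[of p] p x by auto
qed

lemma Fp_nonneg:
  assumes p: "0 < p" "p < 1" and x: "2 * p - 1 \<le> x" "x \<le> 1"
  shows "Fp p x \<ge> 0"
proof (cases "x = 1")
  case True then show ?thesis using p by (simp add: Fp_def)
next
  case False
  then show ?thesis using Fp_mono[of p "2*p-1" x] Fp_h0[of p] p x by auto
qed

lemma absFp_left:
  assumes p: "0 < p" "p < 1" and uv: "-1 < u" "u \<le> v" "v \<le> 2 * p - 1"
  shows "\<bar>Fp p v\<bar> \<le> \<bar>Fp p u\<bar>"
  using Fp_mono[of p u v] Fp_nonpos[of p u] Fp_nonpos[of p v] p uv by auto

lemma absFp_right:
  assumes p: "0 < p" "p < 1" and uv: "2 * p - 1 \<le> u" "u \<le> v" "v < 1"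
  shows "\<bar>Fp p u\<bar> \<le> \<bar>Fp p v\<bar>"
  using Fp_mono[of p u v] Fp_nonneg[of p u] Fp_nonneg[of p v] p uv by auto

lemma Fp_measurable[measurable]: "Fp p \<in> borel_measurable borel"
  unfolding Fp_def[abs_def] by measurable

lemma nn_left:
  assumes p: "0 < p" "p < 1" and a: "-1 \<le> a" "a \<le> 2 * p - 1"
  shows "(\<integral>\<^sup>+u. ennreal (\<bar>Fp p u\<bar> * indicator {a..2*p-1} u) \<partial>lborel) = ennreal (I_p p a)"
proof -
  have "((\<lambda>u. - Fp p u) has_integral ((\<lambda>x. - I_p p x) (2*p-1) - (\<lambda>x. - I_p p x) a)) {a..2*p-1}"
  proof (rule fundamental_theorem_of_calculus_interior)
    show "a \<le> 2 * p - 1" using a by simp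
    show "continuous_on {a..2 * p - 1} (\<lambda>x. - I_p p x)"
      using a p by (intro continuous_on_minus continuous_on_subset[OF I_p_cont]) auto
    fix x assume x: "x \<in> {a<..<2 * p - 1}"
    show "((\<lambda>x. - I_p p x) has_vector_derivative - Fp p x) (at x)"
      using DERIV_minus[OF I_p_deriv[of p x]] x a p
      by (simp add: has_real_derivative_iff_has_vector_derivative)
  qed
  then have "((\<lambda>u. \<bar>Fp p u\<bar>) has_integral I_p p a) {a..2*p-1}"
    using I_p_h0[OF p] Fp_nonpos[OF p] a
    by (subst has_integral_cong[where g = "\<lambda>u. - Fp p u"]) auto
  then have "((\<lambda>u. if u \<in> {a..2*p-1} then \<bar>Fp p u\<bar> else 0) has_integral I_p p a) UNIV"
    by (simp only: has_integral_restrict_UNIV)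
  moreover have "(\<lambda>u. if u \<in> {a..2*p-1} then \<bar>Fp p u\<bar> else 0) = (\<lambda>u. \<bar>Fp p u\<bar> * indicator {a..2*p-1} u)"
    by (auto simp: indicator_def fun_eq_iff)
  ultimately have "((\<lambda>u. \<bar>Fp p u\<bar> * indicator {a..2*p-1} u) has_integral I_p p a) UNIV"
    by simp
  then show ?thesis
    by (intro nn_integral_has_integral_lborel) auto
qed

lemma nn_right:
  assumes p: "0 < p" "p < 1" and a: "2 * p - 1 \<le> a" "a \<le> 1"
  shows "(\<integral>\<^sup>+u. ennreal (\<bar>Fp p u\<bar> * indicator {2*p-1..a} u) \<partial>lborel) = ennreal (I_p p a)"
proof -
  have "(Fp p has_integral (I_p p a - I_p p (2*p-1))) {2*p-1..a}"
  proof (rule fundamental_theorem_of_calculus_interior)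
    show "2 * p - 1 \<le> a" using a by simp
    show "continuous_on {2 * p - 1..a} (I_p p)"
      using a p by (intro continuous_on_subset[OF I_p_cont]) auto
    fix x assume x: "x \<in> {2 * p - 1<..<a}"
    show "(I_p p has_vector_derivative Fp p x) (at x)"
      using I_p_deriv[of p x] x a p
      by (simp add: has_real_derivative_iff_has_vector_derivative)
  qed
  then have "((\<lambda>u. \<bar>Fp p u\<bar>) has_integral I_p p a) {2*p-1..a}"
    using I_p_h0[OF p] Fp_nonneg[OF p] a
    by (subst has_integral_cong[where g = "Fp p"]) auto
  then have "((\<lambda>u. if u \<in> {2*p-1..a} then \<bar>Fp p u\<bar> else 0) has_integral I_p p a) UNIV"
    by (simp only: has_integral_restrict_UNIV)
  moreover have "(\<lambda>u. if u \<in> {2*p-1..a} then \<bar>Fp p u\<bar> else 0) = (\<lambda>u. \<bar>Fp p u\<bar> * indicator {2*p-1..a} u)"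
    by (auto simp: indicator_def fun_eq_iff)
  ultimately have "((\<lambda>u. \<bar>Fp p u\<bar> * indicator {2*p-1..a} u) has_integral I_p p a) UNIV"
    by simp
  then show ?thesis
    by (intro nn_integral_has_integral_lborel) auto
qed



definition cc :: "real \<Rightarrow> real \<Rightarrow> real \<Rightarrow> ennreal" where
  "cc p x u = ennreal (2 * \<bar>Fp p u\<bar> * (if x * ((2 * p - 1) - u) < 0 then 1 else 0))"

lemma cc_measurable[measurable]: "(\<lambda>z. cc p (fst z) (snd z)) \<in> borel_measurable (borel :: (real \<times> real) measure)"
  unfolding cc_def borel_prod[symmetric] by measurable

lemma nu_emeasure:
  fixes \<nu> :: "real measure"
  assumes nu: "prob_space \<nu>" "sets \<nu> = sets borel" "emeasure \<nu> {-1, 1} = 1"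
    and A: "A \<in> sets borel"
  shows "emeasure \<nu> A = ennreal ((if (-1::real) \<in> A then measure \<nu> {-1} else 0) + (if 1 \<in> A then measure \<nu> {1} else 0))"
proof -
  interpret prob_space \<nu> by fact
  have sp: "space \<nu> = UNIV" using sets_eq_imp_space_eq[OF nu(2)] by simp
  have ev: "B \<in> sets \<nu>" if "B \<in> sets borel" for B using that nu(2) by simp
  have "prob {-1, 1} = 1" using nu(3) by (simp add: measure_def)
  then have "prob (UNIV - {-1, 1}) = 0" using prob_compl[of "{-1,1}"] sp ev[of "{-1,1}"] by simp
  then have c0: "emeasure \<nu> (UNIV - {-1, 1}) = 0" by (simp add: emeasure_eq_measure)
  have null: "emeasure \<nu> (A - {-1, 1}) = 0"
  proof -
    have "emeasure \<nu> (A - {-1, 1}) \<le> emeasure \<nu> (UNIV - {-1, 1})"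
      using A ev sp by (intro emeasure_mono) auto
    then show ?thesis using c0 by simp
  qed
  have s1: "A \<inter> {-1} \<in> sets \<nu>" "A \<inter> {1} \<in> sets \<nu>" "A - {-1, 1} \<in> sets \<nu>"
    "(A \<inter> {-1}) \<union> (A \<inter> {1}) \<in> sets \<nu>"
    using A nu(2) by auto
  have d1: "(A \<inter> {-1}) \<inter> (A \<inter> {1}) = {}" by auto
  have d2: "((A \<inter> {-1}) \<union> (A \<inter> {1})) \<inter> (A - {-1, 1}) = {}" by auto
  have eqA: "(A \<inter> {-1}) \<union> (A \<inter> {1}) \<union> (A - {-1, 1}) = A" by auto
  have "emeasure \<nu> A = emeasure \<nu> ((A \<inter> {-1}) \<union> (A \<inter> {1})) + emeasure \<nu> (A - {-1, 1})"
    using plus_emeasure[OF s1(4) s1(3) d2] eqA by simp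
  also have "emeasure \<nu> ((A \<inter> {-1}) \<union> (A \<inter> {1})) = emeasure \<nu> (A \<inter> {-1}) + emeasure \<nu> (A \<inter> {1})"
    using plus_emeasure[OF s1(1) s1(2) d1] by simp
  also have "emeasure \<nu> (A \<inter> {-1}) = ennreal (if (-1::real) \<in> A then prob {-1} else 0)"
  proof (cases "(-1::real) \<in> A")
    case True
    then have "A \<inter> {-1} = {-1}" by auto
    then show ?thesis using True by (simp add: emeasure_eq_measure)
  next
    case False
    then have "A \<inter> {-1} = {}" by auto
    then show ?thesis using False by simp
  qed
  also have "emeasure \<nu> (A \<inter> {1}) = ennreal (if (1::real) \<in> A then prob {1} else 0)"
  proof (cases "(1::real) \<in> A")
    case True
    then have "A \<inter> {1} = {1}" by auto
    then show ?thesis using True by (simp add: emeasure_eq_measure)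
  next
    case False
    then have "A \<inter> {1} = {}" by auto
    then show ?thesis using False by simp
  qed
  also have "emeasure \<nu> (A - {-1, 1}) = 0" by (rule null)
  also have "ennreal (if (-1::real) \<in> A then prob {-1} else 0) + ennreal (if (1::real) \<in> A then prob {1} else 0) + 0
     = ennreal ((if (-1::real) \<in> A then prob {-1} else 0) + (if 1 \<in> A then prob {1} else 0))"
    unfolding add_0_right by (rule ennreal_plus[symmetric]) auto
  finally show ?thesis .
qed

lemma nu_m1:
  fixes \<nu> :: "real measure"
  assumes nu: "prob_space \<nu>" "sets \<nu> = sets borel" "emeasure \<nu> {-1, 1} = 1"
  shows "measure \<nu> {-1} = 1 - measure \<nu> {1}" "0 \<le> measure \<nu> {1}" "measure \<nu> {1} \<le> 1"
proof -
  have "ennreal 1 = ennreal (measure \<nu> {-1} + measure \<nu> {1})"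
    using nu_emeasure[OF nu, of "{-1,1}"] nu(3) by simp
  then have "measure \<nu> {-1} + measure \<nu> {1} = 1"
    by (subst (asm) ennreal_inj) auto
  then show "measure \<nu> {-1} = 1 - measure \<nu> {1}" by simp
  show "0 \<le> measure \<nu> {1}" by simp
  show "measure \<nu> {1} \<le> 1" using nu(1) prob_space.prob_le_1 by blast
qed

lemma couplingD:
  assumes "\<pi> \<in> couplings \<nu> \<mu>"
  shows "prob_space \<pi>" "sets \<pi> = sets borel" "distr \<pi> borel fst = \<nu>" "distr \<pi> borel snd = \<mu>"
    "fst \<in> measurable \<pi> borel" "snd \<in> measurable \<pi> borel"
proof -
  show "prob_space \<pi>" "sets \<pi> = sets borel" "distr \<pi> borel fst = \<nu>" "distr \<pi> borel snd = \<mu>"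
    using assms by (auto simp: couplings_def)
  then show "fst \<in> measurable \<pi> borel" "snd \<in> measurable \<pi> borel"
    by (auto simp: measurable_cong_sets[OF \<open>sets \<pi> = sets borel\<close> refl] borel_prod[symmetric])
qed

lemma unifU_AE: "AE u in unifU. u \<in> {-1<..<1}"
  unfolding unifU_def
proof (rule AE_uniform_measureI)
  show "{-1..1::real} \<in> sets lborel" by simp
  show "AE x in lborel. x \<in> {- 1..1::real} \<longrightarrow> x \<in> {- 1<..<1}"
    using AE_lborel_singleton[of "-1::real"] AE_lborel_singleton[of "1::real"]
    by eventually_elim auto
qed

lemma coupling_AE:
  assumes pi: "\<pi> \<in> couplings \<nu> unifU" and nu: "prob_space \<nu>" "sets \<nu> = sets borel" "emeasure \<nu> {-1, 1} = 1"
  shows "AE z in \<pi>. fst z \<in> {-1, 1} \<and> snd z \<in> {-1<..<1}"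
proof -
  note c = couplingD[OF pi]
  have "AE x in \<nu>. x \<in> {-1, 1}"
    using nu by (subst prob_space.AE_in_set_eq_1) (auto simp: measure_def)
  then have "AE x in distr \<pi> borel fst. x \<in> {-1, 1}" by (simp only: c(3))
  then have 1: "AE z in \<pi>. fst z \<in> {-1, 1}" by (rule AE_distrD[OF c(5)])
  have "AE x in distr \<pi> borel snd. x \<in> {-1<..<1}" unfolding c(4) by (rule unifU_AE)
  then have 2: "AE z in \<pi>. snd z \<in> {-1<..<1}" by (rule AE_distrD[OF c(6)])
  from 1 2 show ?thesis by eventually_elim auto
qed

lemma cost_eq:
  assumes p: "0 < p" "p < 1" and pi: "\<pi> \<in> couplings \<nu> unifU"
  shows "(\<integral>\<^sup>+z. w_p p (fst z) (snd z) \<partial>\<pi>) = (\<integral>\<^sup>+z. cc p (fst z) (snd z) \<partial>\<pi>)"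
proof (rule nn_integral_cong_AE)
  note c = couplingD[OF pi]
  have "AE x in distr \<pi> borel snd. x \<in> {-1<..<1}" unfolding c(4) by (rule unifU_AE)
  then have "AE z in \<pi>. snd z \<in> {-1<..<1}" by (rule AE_distrD[OF c(6)])
  then show "AE z in \<pi>. w_p p (fst z) (snd z) = cc p (fst z) (snd z)"
    by eventually_elim (use p in \<open>auto simp: w_p_def cc_def deriv_I_p\<close>)
qed

lemma dual:
  assumes pi: "\<pi> \<in> couplings \<nu> unifU" and nu: "prob_space \<nu>" "sets \<nu> = sets borel" "emeasure \<nu> {-1, 1} = 1"
    and m[measurable]: "\<phi> \<in> borel_measurable borel" "g \<in> borel_measurable borel" "h \<in> borel_measurable borel"
    and ineq: "\<And>x u. x \<in> {-1, 1} \<Longrightarrow> u \<in> {-1<..<1} \<Longrightarrow> \<phi> x + h u \<le> cc p x u + g u"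
  shows "(\<integral>\<^sup>+x. \<phi> x \<partial>\<nu>) + (\<integral>\<^sup>+u. h u \<partial>unifU) \<le> (\<integral>\<^sup>+z. cc p (fst z) (snd z) \<partial>\<pi>) + (\<integral>\<^sup>+u. g u \<partial>unifU)"
proof -
  note c = couplingD[OF pi]
  have ms: "measurable \<pi> borel = measurable (borel :: (real \<times> real) measure) borel"
    using c(2) by (rule measurable_cong_sets) simp
  have [measurable]: "(\<lambda>z. \<phi> (fst z)) \<in> borel_measurable \<pi>"
    unfolding ms borel_prod[symmetric] by (rule measurable_compose[OF measurable_fst m(1)])
  have [measurable]: "(\<lambda>z. h (snd z)) \<in> borel_measurable \<pi>"
    unfolding ms borel_prod[symmetric] by (rule measurable_compose[OF measurable_snd m(3)])
  have [measurable]: "(\<lambda>z. g (snd z)) \<in> borel_measurable \<pi>"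
    unfolding ms borel_prod[symmetric] by (rule measurable_compose[OF measurable_snd m(2)])
  have [measurable]: "(\<lambda>z. cc p (fst z) (snd z)) \<in> borel_measurable \<pi>"
    unfolding ms by (rule cc_measurable)
  have e1: "(\<integral>\<^sup>+x. \<phi> x \<partial>\<nu>) = (\<integral>\<^sup>+z. \<phi> (fst z) \<partial>\<pi>)"
    using nn_integral_distr[OF c(5), of \<phi>] m(1) by (simp add: c(3) measurable_cong_sets[OF nu(2) refl])
  have e2: "(\<integral>\<^sup>+u. h u \<partial>unifU) = (\<integral>\<^sup>+z. h (snd z) \<partial>\<pi>)"
    using nn_integral_distr[OF c(6), of h] m(3) by (simp add: c(4) unifU_def)
  have e3: "(\<integral>\<^sup>+u. g u \<partial>unifU) = (\<integral>\<^sup>+z. g (snd z) \<partial>\<pi>)"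
    using nn_integral_distr[OF c(6), of g] m(2) by (simp add: c(4) unifU_def)
  have "(\<integral>\<^sup>+z. \<phi> (fst z) \<partial>\<pi>) + (\<integral>\<^sup>+z. h (snd z) \<partial>\<pi>) = (\<integral>\<^sup>+z. \<phi> (fst z) + h (snd z) \<partial>\<pi>)"
    by (rule nn_integral_add[symmetric]; measurable)
  also have "\<dots> \<le> (\<integral>\<^sup>+z. cc p (fst z) (snd z) + g (snd z) \<partial>\<pi>)"
  proof (rule nn_integral_mono_AE)
    show "AE z in \<pi>. \<phi> (fst z) + h (snd z) \<le> cc p (fst z) (snd z) + g (snd z)"
      using coupling_AE[OF pi nu] by eventually_elim (intro ineq; simp)
  qed
  also have "\<dots> = (\<integral>\<^sup>+z. cc p (fst z) (snd z) \<partial>\<pi>) + (\<integral>\<^sup>+z. g (snd z) \<partial>\<pi>)"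
    by (rule nn_integral_add; measurable)
  finally show ?thesis unfolding e1 e2 e3 .
qed



lemma sets_unifU[simp]: "sets unifU = sets borel"
  by (simp add: unifU_def)

lemma space_unifU[simp]: "space unifU = UNIV"
  by (simp add: unifU_def)

lemma prob_space_unifU: "prob_space unifU"
  unfolding unifU_def by (rule prob_space_uniform_measure) auto

lemma nnU:
  assumes [measurable]: "f \<in> borel_measurable borel"
  shows "(\<integral>\<^sup>+u. f u \<partial>unifU) = (\<integral>\<^sup>+u. f u * indicator {-1..1} u \<partial>lborel) / 2"
  unfolding unifU_def by (subst nn_integral_uniform_measure) auto

lemma ennreal_half: "ennreal x / 2 = ennreal (x / 2)" if "0 \<le> x" for x :: real
  using divide_ennreal[of x 2] that by simp

lemma U_ind_right:
  assumes b: "-1 \<le> b" "b \<le> 1" and K: "0 \<le> K"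
  shows "(\<integral>\<^sup>+u. ennreal (K * indicator {b..1} u) \<partial>unifU) = ennreal (K * (1 - b) / 2)"
proof -
  have "(\<integral>\<^sup>+u. ennreal (K * indicator {b..1} u) \<partial>unifU)
      = (\<integral>\<^sup>+u. ennreal (K * indicator {b..1} u) * indicator {-1..1} u \<partial>lborel) / 2"
    by (rule nnU) measurable
  also have "(\<integral>\<^sup>+u. ennreal (K * indicator {b..1} u) * indicator {-1..1} u \<partial>lborel)
      = (\<integral>\<^sup>+u. ennreal K * indicator {b..1} u \<partial>lborel)"
    using b by (intro nn_integral_cong) (auto simp: indicator_def)
  also have "\<dots> = ennreal K * ennreal (1 - b)"
    using b by (simp add: nn_integral_cmult_indicator)
  also have "\<dots> = ennreal (K * (1 - b))" using K b by (simp add: ennreal_mult)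
  finally show ?thesis using K b by (simp add: ennreal_half)
qed

lemma U_ind_left:
  assumes b: "-1 \<le> b" "b \<le> 1" and K: "0 \<le> K"
  shows "(\<integral>\<^sup>+u. ennreal (K * indicator {-1..b} u) \<partial>unifU) = ennreal (K * (b + 1) / 2)"
proof -
  have "(\<integral>\<^sup>+u. ennreal (K * indicator {-1..b} u) \<partial>unifU)
      = (\<integral>\<^sup>+u. ennreal (K * indicator {-1..b} u) * indicator {-1..1} u \<partial>lborel) / 2"
    by (rule nnU) measurable
  also have "(\<integral>\<^sup>+u. ennreal (K * indicator {-1..b} u) * indicator {-1..1} u \<partial>lborel)
      = (\<integral>\<^sup>+u. ennreal K * indicator {-1..b} u \<partial>lborel)"
    using b by (intro nn_integral_cong) (auto simp: indicator_def)
  also have "\<dots> = ennreal K * ennreal (b + 1)"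
    using b by (simp add: nn_integral_cmult_indicator)
  also have "\<dots> = ennreal (K * (b + 1))" using K b by (simp add: ennreal_mult)
  finally show ?thesis using K b by (simp add: ennreal_half)
qed

lemma U_F_left:
  assumes p: "0 < p" "p < 1" and b: "-1 \<le> b" "b \<le> 2 * p - 1"
  shows "(\<integral>\<^sup>+u. ennreal (2 * \<bar>Fp p u\<bar> * indicator {b..2*p-1} u) \<partial>unifU) = ennreal (I_p p b)"
proof -
  have "(\<integral>\<^sup>+u. ennreal (2 * \<bar>Fp p u\<bar> * indicator {b..2*p-1} u) \<partial>unifU)
      = (\<integral>\<^sup>+u. ennreal (2 * \<bar>Fp p u\<bar> * indicator {b..2*p-1} u) * indicator {-1..1} u \<partial>lborel) / 2"
    by (rule nnU) measurable
  also have "(\<integral>\<^sup>+u. ennreal (2 * \<bar>Fp p u\<bar> * indicator {b..2*p-1} u) * indicator {-1..1} u \<partial>lborel)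
      = (\<integral>\<^sup>+u. 2 * ennreal (\<bar>Fp p u\<bar> * indicator {b..2*p-1} u) \<partial>lborel)"
    using b p by (intro nn_integral_cong) (auto simp: indicator_def ennreal_mult)
  also have "\<dots> = 2 * ennreal (I_p p b)"
    using nn_left[OF p b] by (subst nn_integral_cmult) auto
  also have "2 * ennreal (I_p p b) / 2 = ennreal (I_p p b)"
    using mult_divide_eq_ennreal[of 2 "ennreal (I_p p b)"] by (simp add: mult.commute)
  finally show ?thesis .
qed

lemma U_F_right:
  assumes p: "0 < p" "p < 1" and b: "2 * p - 1 \<le> b" "b \<le> 1"
  shows "(\<integral>\<^sup>+u. ennreal (2 * \<bar>Fp p u\<bar> * indicator {2*p-1..b} u) \<partial>unifU) = ennreal (I_p p b)"
proof -
  have "(\<integral>\<^sup>+u. ennreal (2 * \<bar>Fp p u\<bar> * indicator {2*p-1..b} u) \<partial>unifU)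
      = (\<integral>\<^sup>+u. ennreal (2 * \<bar>Fp p u\<bar> * indicator {2*p-1..b} u) * indicator {-1..1} u \<partial>lborel) / 2"
    by (rule nnU) measurable
  also have "(\<integral>\<^sup>+u. ennreal (2 * \<bar>Fp p u\<bar> * indicator {2*p-1..b} u) * indicator {-1..1} u \<partial>lborel)
      = (\<integral>\<^sup>+u. 2 * ennreal (\<bar>Fp p u\<bar> * indicator {2*p-1..b} u) \<partial>lborel)"
    using b p by (intro nn_integral_cong) (auto simp: indicator_def ennreal_mult)
  also have "\<dots> = 2 * ennreal (I_p p b)"
    using nn_right[OF p b] by (subst nn_integral_cmult) auto
  also have "2 * ennreal (I_p p b) / 2 = ennreal (I_p p b)"
    using mult_divide_eq_ennreal[of 2 "ennreal (I_p p b)"] by (simp add: mult.commute)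
  finally show ?thesis .
qed

lemma nu_ind:
  fixes \<nu> :: "real measure"
  assumes nu: "prob_space \<nu>" "sets \<nu> = sets borel" and K: "0 \<le> K"
  shows "(\<integral>\<^sup>+x. ennreal (K * indicator {c} x) \<partial>\<nu>) = ennreal (K * measure \<nu> {c})"
proof -
  interpret prob_space \<nu> by fact
  have "(\<integral>\<^sup>+x. ennreal (K * indicator {c} x) \<partial>\<nu>) = (\<integral>\<^sup>+x. ennreal K * indicator {c} x \<partial>\<nu>)"
    by (intro nn_integral_cong) (auto simp: indicator_def)
  also have "\<dots> = ennreal K * emeasure \<nu> {c}"
    using nu by (simp add: nn_integral_cmult_indicator)
  also have "\<dots> = ennreal (K * measure \<nu> {c})"
    using nu K by (simp add: emeasure_eq_measure ennreal_mult)
  finally show ?thesis .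
qed

lemma limit_right:
  assumes p: "0 < p" "p < 1" and ah: "a < h" "-1 \<le> a" "h \<le> 1"
    and le: "\<And>b. a < b \<Longrightarrow> b < h \<Longrightarrow> ennreal (I_p p b) \<le> X"
  shows "ennreal (I_p p a) \<le> X"
proof (rule tendsto_le[where F = "at a within {a<..<h}" and f = "\<lambda>_. X" and g = "\<lambda>b. ennreal (I_p p b)"])
  show "at a within {a<..<h} \<noteq> bot"
    using ah by (simp add: at_within_eq_bot_iff)
  show "((\<lambda>_. X) \<longlongrightarrow> X) (at a within {a<..<h})" by simp
  have "(I_p p \<longlongrightarrow> I_p p a) (at a within {-1..1})"
    using I_p_cont[OF p] ah unfolding continuous_on_def by auto
  then have "(I_p p \<longlongrightarrow> I_p p a) (at a within {a<..<h})"
    by (rule tendsto_within_subset) (use ah in auto)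
  then show "((\<lambda>b. ennreal (I_p p b)) \<longlongrightarrow> ennreal (I_p p a)) (at a within {a<..<h})"
    by (rule tendsto_ennrealI)
  show "\<forall>\<^sub>F b in at a within {a<..<h}. ennreal (I_p p b) \<le> X"
    by (auto simp: eventually_at_filter intro!: always_eventually le)
qed

lemma limit_left:
  assumes p: "0 < p" "p < 1" and ah: "h < a" "a \<le> 1" "-1 \<le> h"
    and le: "\<And>b. h < b \<Longrightarrow> b < a \<Longrightarrow> ennreal (I_p p b) \<le> X"
  shows "ennreal (I_p p a) \<le> X"
proof (rule tendsto_le[where F = "at a within {h<..<a}" and f = "\<lambda>_. X" and g = "\<lambda>b. ennreal (I_p p b)"])
  show "at a within {h<..<a} \<noteq> bot"
    using ah by (simp add: at_within_eq_bot_iff)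
  show "((\<lambda>_. X) \<longlongrightarrow> X) (at a within {h<..<a})" by simp
  have "(I_p p \<longlongrightarrow> I_p p a) (at a within {-1..1})"
    using I_p_cont[OF p] ah unfolding continuous_on_def by auto
  then have "(I_p p \<longlongrightarrow> I_p p a) (at a within {h<..<a})"
    by (rule tendsto_within_subset) (use ah in auto)
  then show "((\<lambda>b. ennreal (I_p p b)) \<longlongrightarrow> ennreal (I_p p a)) (at a within {h<..<a})"
    by (rule tendsto_ennrealI)
  show "\<forall>\<^sub>F b in at a within {h<..<a}. ennreal (I_p p b) \<le> X"
    by (auto simp: eventually_at_filter intro!: always_eventually le)
qed



lemma LB_left:
  fixes \<nu> :: "real measure"
  assumes p: "0 < p" "p < 1"
    and nu: "prob_space \<nu>" "sets \<nu> = sets borel" "emeasure \<nu> {-1, 1} = 1"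
    and pi: "\<pi> \<in> couplings \<nu> unifU"
    and lt: "2 * measure \<nu> {1} - 1 < 2 * p - 1"
  shows "ennreal (I_p p (2 * measure \<nu> {1} - 1)) \<le> (\<integral>\<^sup>+z. cc p (fst z) (snd z) \<partial>\<pi>)"
proof -
  define q where "q = measure \<nu> {1}"
  define a where "a = 2 * q - 1"
  define h where "h = 2 * p - 1"
  define X where "X = (\<integral>\<^sup>+z. cc p (fst z) (snd z) \<partial>\<pi>)"
  have q: "measure \<nu> {-1} = 1 - q" "0 \<le> q" "q \<le> 1" using nu_m1[OF nu] by (auto simp: q_def)
  have ah: "a < h" "-1 \<le> a" "h \<le> 1" using lt q p by (auto simp: a_def h_def q_def)
  have step: "ennreal (I_p p b) \<le> X" if b: "a < b" "b < h" for b
  proof -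
    have b1: "-1 < b" "b < 1" using b ah by auto
    define K where "K = 2 * \<bar>Fp p b\<bar>"
    have K0: "0 \<le> K" by (simp add: K_def)
    have ineq: "ennreal (K * indicator {-1} x) + ennreal (2 * \<bar>Fp p u\<bar> * indicator {b..h} u)
       \<le> cc p x u + ennreal (K * indicator {b..1} u)" if x: "x \<in> {-1, 1}" and u: "u \<in> {-1<..<1}" for x u
    proof -
      have m1: "K \<le> 2 * \<bar>Fp p u\<bar>" if "u < b"
        using absFp_left[OF p, of u b] that u b h_def unfolding K_def by auto
      have m2: "2 * \<bar>Fp p u\<bar> \<le> K" if "b \<le> u" "u \<le> h"
        using absFp_left[OF p, of b u] that b1 h_def unfolding K_def by auto
      have fh: "Fp p h = 0" using Fp_h0[OF p] by (simp add: h_def)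
      have r: "K * indicator {-1} x + 2 * \<bar>Fp p u\<bar> * indicator {b..h} u
          \<le> 2 * \<bar>Fp p u\<bar> * (if x * (h - u) < 0 then 1 else 0) + K * indicator {b..1} u"
      proof (cases "x = -1")
        case True
        then show ?thesis
          using m1 m2 fh u b ah K0 by (cases "u < b"; cases "u < h"; cases "u = h") (auto simp: indicator_def)
      next
        case False
        then have "x = 1" using x by auto
        then show ?thesis
          using m1 m2 fh u b ah K0 by (cases "u < b"; cases "u \<le> h") (auto simp: indicator_def)
      qed
      have "ennreal (K * indicator {-1} x) + ennreal (2 * \<bar>Fp p u\<bar> * indicator {b..h} u)
          = ennreal (K * indicator {-1} x + 2 * \<bar>Fp p u\<bar> * indicator {b..h} u)"
        using K0 by (intro ennreal_plus[symmetric]) auto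
      also have "\<dots> \<le> ennreal (2 * \<bar>Fp p u\<bar> * (if x * (h - u) < 0 then 1 else 0) + K * indicator {b..1} u)"
        by (rule ennreal_leI[OF r])
      also have "\<dots> = cc p x u + ennreal (K * indicator {b..1} u)"
        unfolding cc_def h_def using K0 by (intro ennreal_plus) auto
      finally show ?thesis .
    qed
    have main: "(\<integral>\<^sup>+x. ennreal (K * indicator {-1} x) \<partial>\<nu>) + (\<integral>\<^sup>+u. ennreal (2 * \<bar>Fp p u\<bar> * indicator {b..h} u) \<partial>unifU)
       \<le> X + (\<integral>\<^sup>+u. ennreal (K * indicator {b..1} u) \<partial>unifU)"
      unfolding X_def by (rule dual[OF pi nu _ _ _ ineq]) auto
    have i1: "(\<integral>\<^sup>+x. ennreal (K * indicator {-1} x) \<partial>\<nu>) = ennreal (K * (1 - q))"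
      using nu_ind[OF nu(1,2) K0, of "-1"] q by simp
    have i2: "(\<integral>\<^sup>+u. ennreal (2 * \<bar>Fp p u\<bar> * indicator {b..h} u) \<partial>unifU) = ennreal (I_p p b)"
      using U_F_left[OF p, of b] b1 b unfolding h_def by simp
    have i3: "(\<integral>\<^sup>+u. ennreal (K * indicator {b..1} u) \<partial>unifU) = ennreal (K * (1 - b) / 2)"
      using U_ind_right[OF _ _ K0, of b] b1 by simp
    have spl: "ennreal (K * (1 - q)) = ennreal (K * (1 - b) / 2) + ennreal (K * (b - a) / 2)"
    proof -
      have eq: "K * (1 - q) = K * (1 - b) / 2 + K * (b - a) / 2" by (simp add: a_def field_simps)
      have nn: "0 \<le> K * (1 - b) / 2" "0 \<le> K * (b - a) / 2" using K0 b1 b by auto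
      show ?thesis unfolding eq by (rule ennreal_plus[OF nn])
    qed
    have "ennreal (K * (1 - b) / 2) + ennreal (I_p p b)
        \<le> ennreal (K * (1 - b) / 2) + (ennreal (K * (b - a) / 2) + ennreal (I_p p b))"
      by (intro add_left_mono add_increasing) auto
    also have "\<dots> = ennreal (K * (1 - q)) + ennreal (I_p p b)" by (simp add: spl add.assoc)
    also have "\<dots> \<le> X + ennreal (K * (1 - b) / 2)" using main i1 i2 i3 by simp
    also have "\<dots> = ennreal (K * (1 - b) / 2) + X" by (simp add: add.commute)
    finally show ?thesis by (simp add: ennreal_add_left_cancel_le)
  qed
  have "ennreal (I_p p a) \<le> X"
    by (rule limit_right[OF p ah step])
  then show ?thesis by (simp add: X_def a_def q_def)
qed



lemma LB_right:
  fixes \<nu> :: "real measure"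
  assumes p: "0 < p" "p < 1"
    and nu: "prob_space \<nu>" "sets \<nu> = sets borel" "emeasure \<nu> {-1, 1} = 1"
    and pi: "\<pi> \<in> couplings \<nu> unifU"
    and lt: "2 * p - 1 < 2 * measure \<nu> {1} - 1"
  shows "ennreal (I_p p (2 * measure \<nu> {1} - 1)) \<le> (\<integral>\<^sup>+z. cc p (fst z) (snd z) \<partial>\<pi>)"
proof -
  define q where "q = measure \<nu> {1}"
  define a where "a = 2 * q - 1"
  define h where "h = 2 * p - 1"
  define X where "X = (\<integral>\<^sup>+z. cc p (fst z) (snd z) \<partial>\<pi>)"
  have q: "measure \<nu> {-1} = 1 - q" "0 \<le> q" "q \<le> 1" using nu_m1[OF nu] by (auto simp: q_def)
  have ah: "h < a" "a \<le> 1" "-1 \<le> h" using lt q p by (auto simp: a_def h_def q_def)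
  have step: "ennreal (I_p p b) \<le> X" if b: "h < b" "b < a" for b
  proof -
    have b1: "-1 < b" "b < 1" using b ah by auto
    define K where "K = 2 * \<bar>Fp p b\<bar>"
    have K0: "0 \<le> K" by (simp add: K_def)
    have ineq: "ennreal (K * indicator {1} x) + ennreal (2 * \<bar>Fp p u\<bar> * indicator {h..b} u)
       \<le> cc p x u + ennreal (K * indicator {-1..b} u)" if x: "x \<in> {-1, 1}" and u: "u \<in> {-1<..<1}" for x u
    proof -
      have m1: "K \<le> 2 * \<bar>Fp p u\<bar>" if "b < u"
        using absFp_right[OF p, of b u] that u b h_def unfolding K_def by auto
      have m2: "2 * \<bar>Fp p u\<bar> \<le> K" if "h \<le> u" "u \<le> b"
        using absFp_right[OF p, of u b] that b1 h_def unfolding K_def by auto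
      have fh: "Fp p h = 0" using Fp_h0[OF p] by (simp add: h_def)
      have r: "K * indicator {1} x + 2 * \<bar>Fp p u\<bar> * indicator {h..b} u
          \<le> 2 * \<bar>Fp p u\<bar> * (if x * (h - u) < 0 then 1 else 0) + K * indicator {-1..b} u"
      proof (cases "x = 1")
        case True
        then show ?thesis
          using m1 m2 fh u b ah K0 by (cases "b < u"; cases "h < u"; cases "u = h") (auto simp: indicator_def)
      next
        case False
        then have "x = -1" using x by auto
        then show ?thesis
          using m1 m2 fh u b ah K0 by (cases "b < u"; cases "h \<le> u") (auto simp: indicator_def)
      qed
      have "ennreal (K * indicator {1} x) + ennreal (2 * \<bar>Fp p u\<bar> * indicator {h..b} u)
          = ennreal (K * indicator {1} x + 2 * \<bar>Fp p u\<bar> * indicator {h..b} u)"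
        using K0 by (intro ennreal_plus[symmetric]) auto
      also have "\<dots> \<le> ennreal (2 * \<bar>Fp p u\<bar> * (if x * (h - u) < 0 then 1 else 0) + K * indicator {-1..b} u)"
        by (rule ennreal_leI[OF r])
      also have "\<dots> = cc p x u + ennreal (K * indicator {-1..b} u)"
        unfolding cc_def h_def using K0 by (intro ennreal_plus) auto
      finally show ?thesis .
    qed
    have main: "(\<integral>\<^sup>+x. ennreal (K * indicator {1} x) \<partial>\<nu>) + (\<integral>\<^sup>+u. ennreal (2 * \<bar>Fp p u\<bar> * indicator {h..b} u) \<partial>unifU)
       \<le> X + (\<integral>\<^sup>+u. ennreal (K * indicator {-1..b} u) \<partial>unifU)"
      unfolding X_def by (rule dual[OF pi nu _ _ _ ineq]) auto
    have i1: "(\<integral>\<^sup>+x. ennreal (K * indicator {1} x) \<partial>\<nu>) = ennreal (K * q)"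
      using nu_ind[OF nu(1,2) K0, of "1"] q by (simp add: q_def)
    have i2: "(\<integral>\<^sup>+u. ennreal (2 * \<bar>Fp p u\<bar> * indicator {h..b} u) \<partial>unifU) = ennreal (I_p p b)"
      using U_F_right[OF p, of b] b1 b unfolding h_def by simp
    have i3: "(\<integral>\<^sup>+u. ennreal (K * indicator {-1..b} u) \<partial>unifU) = ennreal (K * (b + 1) / 2)"
      using U_ind_left[OF _ _ K0, of b] b1 by simp
    have spl: "ennreal (K * q) = ennreal (K * (b + 1) / 2) + ennreal (K * (a - b) / 2)"
    proof -
      have eq: "K * q = K * (b + 1) / 2 + K * (a - b) / 2" by (simp add: a_def field_simps)
      have nn: "0 \<le> K * (b + 1) / 2" "0 \<le> K * (a - b) / 2" using K0 b1 b by auto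
      show ?thesis unfolding eq by (rule ennreal_plus[OF nn])
    qed
    have "ennreal (K * (b + 1) / 2) + ennreal (I_p p b)
        \<le> ennreal (K * (b + 1) / 2) + (ennreal (K * (a - b) / 2) + ennreal (I_p p b))"
      by (intro add_left_mono add_increasing) auto
    also have "\<dots> = ennreal (K * q) + ennreal (I_p p b)" by (simp add: spl add.assoc)
    also have "\<dots> \<le> X + ennreal (K * (b + 1) / 2)" using main i1 i2 i3 by simp
    also have "\<dots> = ennreal (K * (b + 1) / 2) + X" by (simp add: add.commute)
    finally show ?thesis by (simp add: ennreal_add_left_cancel_le)
  qed
  have "ennreal (I_p p a) \<le> X"
    by (rule limit_left[OF p ah step])
  then show ?thesis by (simp add: X_def a_def q_def)
qed



lemma UB:
  fixes \<nu> :: "real measure"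
  assumes p: "0 < p" "p < 1"
    and nu: "prob_space \<nu>" "sets \<nu> = sets borel" "emeasure \<nu> {-1, 1} = 1"
  shows "\<exists>\<pi> \<in> couplings \<nu> unifU. (\<integral>\<^sup>+z. cc p (fst z) (snd z) \<partial>\<pi>) \<le> ennreal (I_p p (2 * measure \<nu> {1} - 1))"
proof -
  define q where "q = measure \<nu> {1}"
  define a where "a = 2 * q - 1"
  define h where "h = 2 * p - 1"
  have q: "measure \<nu> {-1} = 1 - q" "0 \<le> q" "q \<le> 1" using nu_m1[OF nu] by (auto simp: q_def)
  have a: "-1 \<le> a" "a \<le> 1" using q by (auto simp: a_def)
  define s where "s u = (if u < a then 1 else -1::real)" for u
  define T where "T u = (s u, u)" for u
  have mc: "measurable unifU (borel :: real measure) = measurable borel borel" 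
    by (rule measurable_cong_sets) auto
  have mc2: "measurable unifU (borel :: (real \<times> real) measure) = measurable borel borel" 
    by (rule measurable_cong_sets) auto
  have sm0: "s \<in> measurable borel borel" unfolding s_def by measurable
  have sm: "s \<in> measurable unifU borel" using sm0 by (subst measurable_cong_sets[OF sets_unifU refl])
  have Tm0: "T \<in> measurable borel borel" unfolding T_def s_def borel_prod[symmetric] by measurable
  have Tm: "T \<in> measurable unifU borel" using Tm0 by (subst measurable_cong_sets[OF sets_unifU refl])
  have fstm: "fst \<in> measurable (borel :: (real \<times> real) measure) borel" unfolding borel_prod[symmetric] by simp
  have sndm: "snd \<in> measurable (borel :: (real \<times> real) measure) borel" unfolding borel_prod[symmetric] by simp
  define \<pi> where "\<pi> = distr unifU borel T"
  have ps: "prob_space \<pi>" unfolding \<pi>_def by (rule prob_space.prob_space_distr[OF prob_space_unifU Tm])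
  have m2: "distr \<pi> borel snd = unifU"
  proof -
    have "distr \<pi> borel snd = distr unifU borel (snd \<circ> T)" unfolding \<pi>_def by (rule distr_distr[OF sndm Tm])
    also have "snd \<circ> T = (\<lambda>x. x)" by (auto simp: T_def)
    also have "distr unifU borel (\<lambda>x. x) = unifU" by (rule distr_id2) simp
    finally show ?thesis .
  qed
  have Us1: "emeasure unifU {..<a} = ennreal q"
  proof -
    have "emeasure unifU {..<a} = emeasure lborel ({-1..1} \<inter> {..<a}) / emeasure lborel {-1..1::real}"
      unfolding unifU_def by (rule emeasure_uniform_measure) auto
    also have "{-1..1} \<inter> {..<a} = {-1..<a}" using a by auto
    finally show ?thesis using a by (simp add: a_def ennreal_half)
  qed
  have Us2: "emeasure unifU {a..} = ennreal (1 - q)"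
  proof -
    have "emeasure unifU {a..} = emeasure lborel ({-1..1} \<inter> {a..}) / emeasure lborel {-1..1::real}"
      unfolding unifU_def by (rule emeasure_uniform_measure) auto
    also have "{-1..1} \<inter> {a..} = {a..1}" using a by auto
    finally show ?thesis using a by (simp add: a_def ennreal_half)
  qed
  have Us3: "emeasure unifU UNIV = 1"
    using prob_space.emeasure_space_1[OF prob_space_unifU] by simp
  have m1: "distr \<pi> borel fst = \<nu>"
  proof -
    have "distr \<pi> borel fst = distr unifU borel (fst \<circ> T)" unfolding \<pi>_def by (rule distr_distr[OF fstm Tm])
    also have "fst \<circ> T = s" by (auto simp: T_def)
    also have "distr unifU borel s = \<nu>"
    proof (rule measure_eqI)
      show "sets (distr unifU borel s) = sets \<nu>" using nu(2) by simp
      fix A assume "A \<in> sets (distr unifU borel s)"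
      then have A: "A \<in> sets borel" by simp
      have "emeasure (distr unifU borel s) A = emeasure unifU (s -` A \<inter> space unifU)"
        by (rule emeasure_distr[OF sm A])
      also have "s -` A \<inter> space unifU = (if 1 \<in> A then {..<a} else {}) \<union> (if -1 \<in> A then {a..} else {})"
        by (auto simp: s_def split: if_splits)
      also have "emeasure unifU \<dots> = ennreal ((if (-1::real) \<in> A then 1 - q else 0) + (if 1 \<in> A then q else 0))"
      proof (cases "(1::real) \<in> A"; cases "(-1::real) \<in> A")
        assume "(1::real) \<in> A" "(-1::real) \<in> A"
        moreover have "{..<a} \<union> {a..} = UNIV" by auto
        ultimately show ?thesis using Us3 by simp
      next
        assume "(1::real) \<in> A" "(-1::real) \<notin> A"
        then show ?thesis using Us1 by simp
      next
        assume "(1::real) \<notin> A" "(-1::real) \<in> A"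
        then show ?thesis using Us2 by simp
      next
        assume "(1::real) \<notin> A" "(-1::real) \<notin> A"
        then show ?thesis by simp
      qed
      also have "\<dots> = emeasure \<nu> A"
        using nu_emeasure[OF nu A] q by (simp add: q_def)
      finally show "emeasure (distr unifU borel s) A = emeasure \<nu> A" .
    qed
    finally show ?thesis .
  qed
  have pi: "\<pi> \<in> couplings \<nu> unifU"
    using ps m1 m2 by (simp add: couplings_def \<pi>_def)
  have cost: "(\<integral>\<^sup>+z. cc p (fst z) (snd z) \<partial>\<pi>) = (\<integral>\<^sup>+u. cc p (s u) u \<partial>unifU)"
    unfolding \<pi>_def by (subst nn_integral_distr[OF Tm]) (auto simp: T_def)
  have "(\<integral>\<^sup>+u. cc p (s u) u \<partial>unifU) \<le> ennreal (I_p p a)"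
  proof (cases "a \<le> h")
    case True
    have "(\<integral>\<^sup>+u. cc p (s u) u \<partial>unifU) \<le> (\<integral>\<^sup>+u. ennreal (2 * \<bar>Fp p u\<bar> * indicator {a..2*p-1} u) \<partial>unifU)"
    proof (rule nn_integral_mono)
      fix u
      show "cc p (s u) u \<le> ennreal (2 * \<bar>Fp p u\<bar> * indicator {a..2*p-1} u)"
        using True unfolding cc_def s_def h_def by (cases "u < a"; cases "u < 2 * p - 1") (auto simp: indicator_def)
    qed
    also have "\<dots> = ennreal (I_p p a)" using U_F_left[OF p, of a] a True h_def by simp
    finally show ?thesis .
  next
    case False
    have "(\<integral>\<^sup>+u. cc p (s u) u \<partial>unifU) \<le> (\<integral>\<^sup>+u. ennreal (2 * \<bar>Fp p u\<bar> * indicator {2*p-1..a} u) \<partial>unifU)"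
    proof (rule nn_integral_mono)
      fix u
      show "cc p (s u) u \<le> ennreal (2 * \<bar>Fp p u\<bar> * indicator {2*p-1..a} u)"
        using False unfolding cc_def s_def h_def by (cases "u < a"; cases "u < 2 * p - 1") (auto simp: indicator_def)
    qed
    also have "\<dots> = ennreal (I_p p a)" using U_F_right[OF p, of a] a False h_def by simp
    finally show ?thesis .
  qed
  then have "(\<integral>\<^sup>+z. cc p (fst z) (snd z) \<partial>\<pi>) \<le> ennreal (I_p p (2 * measure \<nu> {1} - 1))"
    using cost by (simp add: a_def q_def)
  then show ?thesis using pi by blast
qed

lemma KL:
  fixes \<nu> :: "real measure"
  assumes p: "0 < p" "p < 1"
    and nu: "prob_space \<nu>" "sets \<nu> = sets borel" "emeasure \<nu> {-1, 1} = 1"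
  shows "rel_entropy \<nu> (mu_p p) = I_p p (2 * measure \<nu> {1} - 1)"
proof -
  define q where "q = measure \<nu> {1}"
  have q: "measure \<nu> {-1} = 1 - q" "0 \<le> q" "q \<le> 1" using nu_m1[OF nu] by (auto simp: q_def)
  define B where "B = measure_pmf (bernoulli_pmf p)"
  define g where "g b = (if b then 1 else -1::real)" for b
  define D where "D x = (if x = 1 then q / p else (1 - q) / (1 - p))" for x :: real
  have mu: "mu_p p = distr B borel g" unfolding mu_p_def B_def g_def[abs_def] ..
  have gm: "g \<in> measurable B borel" by (simp add: B_def)
  have ps: "prob_space (mu_p p)" unfolding mu B_def by (rule prob_space.prob_space_distr[OF prob_space_measure_pmf gm[unfolded B_def]])
  have sets_mu: "sets (mu_p p) = sets borel" unfolding mu by simp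
  have D0: "0 \<le> D x" for x using p q by (auto simp: D_def)
  have Dm: "D \<in> borel_measurable borel" unfolding D_def by measurable
  have Dm': "D \<in> borel_measurable (mu_p p)" using Dm by (simp add: measurable_cong_sets[OF sets_mu refl])
  have fin: "finite (set_pmf (bernoulli_pmf p))" by (rule finite_subset[of _ UNIV]) auto
  have nuD: "\<nu> = density (mu_p p) (\<lambda>x. ennreal (D x))"
  proof (rule measure_eqI)
    show "sets \<nu> = sets (density (mu_p p) (\<lambda>x. ennreal (D x)))" using nu(2) sets_mu by simp
    fix A assume "A \<in> sets \<nu>"
    then have A: "A \<in> sets borel" using nu(2) by simp
    have "emeasure (density (mu_p p) (\<lambda>x. ennreal (D x))) A = (\<integral>\<^sup>+x. ennreal (D x) * indicator A x \<partial>mu_p p)"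
      by (rule emeasure_density) (use Dm' A sets_mu in auto)
    also have "\<dots> = (\<integral>\<^sup>+x. ennreal (D x * indicator A x) \<partial>mu_p p)"
      by (intro nn_integral_cong) (auto simp: indicator_def)
    also have "\<dots> = (\<integral>\<^sup>+b. ennreal (D (g b) * indicator A (g b)) \<partial>B)"
      unfolding mu by (rule nn_integral_distr[OF gm]) (use A Dm in measurable)
    also have "\<dots> = ennreal (\<integral>b. D (g b) * indicator A (g b) \<partial>B)"
      unfolding B_def
      by (rule nn_integral_eq_integral) (use fin D0 in \<open>auto intro!: integrable_measure_pmf_finite\<close>)
    also have "(\<integral>b. D (g b) * indicator A (g b) \<partial>B) = (\<Sum>b\<in>UNIV. pmf (bernoulli_pmf p) b *\<^sub>R (D (g b) * indicator A (g b)))"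
      unfolding B_def by (rule integral_measure_pmf) auto
    also have "\<dots> = (if (-1::real) \<in> A then 1 - q else 0) + (if 1 \<in> A then q else 0)"
      using p by (simp add: UNIV_bool D_def g_def indicator_def)
    also have "ennreal \<dots> = emeasure \<nu> A"
      using nu_emeasure[OF nu A] q by (simp add: q_def)
    finally show "emeasure \<nu> A = emeasure (density (mu_p p) (\<lambda>x. ennreal (D x))) A" by simp
  qed
  have "rel_entropy \<nu> (mu_p p) = KL_divergence (exp 1) (mu_p p) (density (mu_p p) (\<lambda>x. ennreal (D x)))"
    unfolding rel_entropy_def by (subst nuD) (rule refl)
  also have "\<dots> = (\<integral>x. D x * log (exp 1) (D x) \<partial>mu_p p)"
    by (rule sigma_finite_measure.KL_density[OF prob_space_imp_sigma_finite[OF ps]]) (use Dm' D0 in auto)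
  also have "\<dots> = (\<integral>b. D (g b) * log (exp 1) (D (g b)) \<partial>B)"
    unfolding mu by (rule integral_distr[OF gm]) (use Dm in measurable)
  also have "\<dots> = (\<Sum>b\<in>UNIV. pmf (bernoulli_pmf p) b *\<^sub>R (D (g b) * log (exp 1) (D (g b))))"
    unfolding B_def by (rule integral_measure_pmf) auto
  also have "\<dots> = q * ln (q / p) + (1 - q) * ln ((1 - q) / (1 - p))"
    using p by (simp add: UNIV_bool D_def g_def log_def)
  also have "\<dots> = I_p p (2 * q - 1)"
  proof -
    have e1: "(1 + (2 * q - 1)) / (2 * p) = q / p" "(1 + (2 * q - 1)) / 2 = q" using p by (auto simp: field_simps)
    have e2: "(1 - (2 * q - 1)) / (2 * (1 - p)) = (1 - q) / (1 - p)" "(1 - (2 * q - 1)) / 2 = 1 - q" using p by (auto simp: field_simps)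
    show ?thesis unfolding I_p_def e1 e2 ..
  qed
  finally show ?thesis by (simp add: q_def)
qed


theorem lemma3p10:
  fixes p :: real and \<nu> :: "real measure"
  assumes "0 < p" and "p < 1"
    and "prob_space \<nu>" and "sets \<nu> = sets borel" and "emeasure \<nu> {-1, 1} = 1"
  shows "transport_cost (w_p p) \<nu> unifU = ennreal (rel_entropy \<nu> (mu_p p))"
proof -
  note p = assms(1,2)
  note nu = assms(3,4,5)
  define a where "a = 2 * measure \<nu> {1} - 1"
  have eq: "transport_cost (w_p p) \<nu> unifU = (INF \<pi> \<in> couplings \<nu> unifU. \<integral>\<^sup>+z. cc p (fst z) (snd z) \<partial>\<pi>)"
    unfolding transport_cost_def by (intro INF_cong refl cost_eq[OF p])
  have le: "(INF \<pi> \<in> couplings \<nu> unifU. \<integral>\<^sup>+z. cc p (fst z) (snd z) \<partial>\<pi>) \<le> ennreal (I_p p a)"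
  proof -
    obtain \<pi> where pi: "\<pi> \<in> couplings \<nu> unifU"
      and c: "(\<integral>\<^sup>+z. cc p (fst z) (snd z) \<partial>\<pi>) \<le> ennreal (I_p p a)"
      using UB[OF p nu] unfolding a_def by blast
    have "(INF \<pi> \<in> couplings \<nu> unifU. \<integral>\<^sup>+z. cc p (fst z) (snd z) \<partial>\<pi>) \<le> (\<integral>\<^sup>+z. cc p (fst z) (snd z) \<partial>\<pi>)"
      using pi by (rule INF_lower)
    then show ?thesis using c by (rule order_trans)
  qed
  have ge: "ennreal (I_p p a) \<le> (INF \<pi> \<in> couplings \<nu> unifU. \<integral>\<^sup>+z. cc p (fst z) (snd z) \<partial>\<pi>)"
  proof (rule INF_greatest)
    fix \<pi> assume pi: "\<pi> \<in> couplings \<nu> unifU"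
    show "ennreal (I_p p a) \<le> (\<integral>\<^sup>+z. cc p (fst z) (snd z) \<partial>\<pi>)"
    proof (cases "a < 2 * p - 1")
      case True
      then show ?thesis using LB_left[OF p nu pi] by (simp add: a_def)
    next
      case False
      show ?thesis
      proof (cases "2 * p - 1 < a")
        case True
        then show ?thesis using LB_right[OF p nu pi] by (simp add: a_def)
      next
        case False
        then have "a = 2 * p - 1" using \<open>\<not> a < 2 * p - 1\<close> by simp
        then show ?thesis using I_p_h0[OF p] by simp
      qed
    qed
  qed
  have "transport_cost (w_p p) \<nu> unifU = ennreal (I_p p a)"
    using eq le ge by simp
  then show ?thesis using KL[OF p nu] by (simp add: a_def)
qed

end
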